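(* Let $U\subset\mathbb{R}^n$ be a bounded, open, connected set and let $(u_1,u_2)$ be a viscosity supersolution of the system (S) in $U$. Assume that $\min_{i=1,2}\inf_{U}u_i$ is attained at a point of $U$, i.e. there exist $i_0\in\{1,2\}$ and $x^*\in U$ with $u_{i_0}(x^* )\le u_i(x)$ for all $x\in U$, $i=1,2$. Then there is a constant $C$ such that $u_1\equiv u_2\equiv C$ in $U$.
   Context: For $\varphi\in C^2$ near $x$, set $\Delta_\infty\varphi(x)=|D\varphi(x)|^{-2}\sum_{k,l=1}^n\varphi_{x_k}\varphi_{x_l}\varphi_{x_kx_l}(x)$ when $D\varphi(x)\neq0$. Define $\Delta_\infty^+\varphi(x)=\Delta_\infty\varphi(x)$ if $D\varphi(x)\ne0$ and $\Delta_\infty^+\varphi(x)=\max\{D^2\varphi(x)v\cdot v: v\in\mathbb{S}^{n-1}\}$ if $D\varphi(x)=0$; define $\Delta_\infty^-\varphi(x)$ in the same way with $\min$ in place of $\max$. The system (S) on an open set $\Omega$ is: $-\Delta_\infty u_1+u_1-u_2=0$ and $-\Delta_\infty u_2+u_2-u_1=0$ in $\Omega$. A pair $(u_1,u_2)$ of upper semicontinuous functions on $\Omega$ is a viscosity subsolution of (S) in $\Omega$ if for each $i\in\{1,2\}$, $j=3-i$, and each $\varphi\in C^2(\Omega)$ such that $u_i-\varphi$ has a local maximum at $x_0\in\Omega$, one has $-\Delta_\infty^+\varphi(x_0)+u_i(x_0)-u_j(x_0)\le0$. A pair of lower semicontinuous functions on $\Omega$ is a viscosity supersolution if for each $i$,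 $j=3-i$, and each $\varphi\in C^2(\Omega)$ such that $u_i-\varphi$ has a local minimum at $x_0\in\Omega$, one has $-\Delta_\infty^-\varphi(x_0)+u_i(x_0)-u_j(x_0)\ge0$. A viscosity solution is a pair that is both a subsolution and a supersolution. *)

theory Defs
  imports "HOL-Analysis.Analysis"
begin

definition grad :: "(real^'n \<Rightarrow> real) \<Rightarrow> real^'n \<Rightarrow> real^'n" where
  "grad \<phi> x = (\<chi> k. frechet_derivative \<phi> (at x) (axis k 1))"

definition hess :: "(real^'n \<Rightarrow> real) \<Rightarrow> real^'n \<Rightarrow> real^'n^'n" where
  "hess \<phi> x = (\<chi> k l. frechet_derivative (\<lambda>y. grad \<phi> y $ k) (at x) (axis l 1))"

definition C2_on :: "(real^'n) set \<Rightarrow> (real^'n \<Rightarrow> real) \<Rightarrow> bool" where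
  "C2_on \<Omega> \<phi> \<longleftrightarrow>
     (\<forall>x\<in>\<Omega>. \<phi> differentiable (at x)) \<and>
     (\<forall>x\<in>\<Omega>. \<forall>k. (\<lambda>y. grad \<phi> y $ k) differentiable (at x)) \<and>
     continuous_on \<Omega> (hess \<phi>)"

definition inf_laplace_minus :: "(real^'n \<Rightarrow> real) \<Rightarrow> real^'n \<Rightarrow> real" where
  "inf_laplace_minus \<phi> x =
     (if grad \<phi> x \<noteq> 0
      then (\<Sum>k\<in>UNIV. \<Sum>l\<in>UNIV. grad \<phi> x $ k * grad \<phi> x $ l * hess \<phi> x $ k $ l)
           / (norm (grad \<phi> x))\<^sup>2
      else Inf {(hess \<phi> x *v v) \<bullet> v | v. norm v = 1})"

definition lsc_on :: "(real^'n) set \<Rightarrow> (real^'n \<Rightarrow> real) \<Rightarrow> bool" where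
  "lsc_on \<Omega> u \<longleftrightarrow>
     (\<forall>x\<in>\<Omega>. \<forall>e>0. \<exists>d>0. \<forall>y\<in>\<Omega>. dist y x < d \<longrightarrow> u x - e < u y)"

definition local_min_on :: "(real^'n) set \<Rightarrow> (real^'n \<Rightarrow> real) \<Rightarrow> real^'n \<Rightarrow> bool" where
  "local_min_on \<Omega> f x0 \<longleftrightarrow> x0 \<in> \<Omega> \<and>
     (\<exists>r>0. \<forall>y\<in>\<Omega>. dist y x0 < r \<longrightarrow> f x0 \<le> f y)"

text \<open>Supersolution condition for the i-th equation, with u = u_i and w = u_j.\<close>
definition super_cond :: "(real^'n) set \<Rightarrow> (real^'n \<Rightarrow> real) \<Rightarrow> (real^'n \<Rightarrow> real) \<Rightarrow> bool" where
  "super_cond \<Omega> u w \<longleftrightarrow>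
     (\<forall>\<phi> x0. C2_on \<Omega> \<phi> \<longrightarrow> local_min_on \<Omega> (\<lambda>y. u y - \<phi> y) x0 \<longrightarrow>
        - inf_laplace_minus \<phi> x0 + u x0 - w x0 \<ge> 0)"

definition visc_supersol :: "(real^'n) set \<Rightarrow> (real^'n \<Rightarrow> real) \<Rightarrow> (real^'n \<Rightarrow> real) \<Rightarrow> bool" where
  "visc_supersol \<Omega> u1 u2 \<longleftrightarrow>
     lsc_on \<Omega> u1 \<and> lsc_on \<Omega> u2 \<and> super_cond \<Omega> u1 u2 \<and> super_cond \<Omega> u2 u1"

end

theory Submission
  imports Defs
begin


lemma lsc_min:
  fixes f :: "'a::heine_borel \<Rightarrow> real"
  assumes K: "compact K" "K \<noteq> {}"
    and lsc: "\<forall>x\<in>K. \<forall>e>0. \<exists>d>0. \<forall>y\<in>K. dist y x < d \<longrightarrow> f x - e < f y"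
  shows "\<exists>p\<in>K. \<forall>x\<in>K. f p \<le> f x"
proof -
  define C where "C t = {x\<in>K. f x \<le> t}" for t
  have cl: "closed (C t)" for t
  proof -
    have "closure (C t) \<subseteq> C t"
    proof
      fix x assume x: "x \<in> closure (C t)"
      have "x \<in> closure K" using x closure_mono[of "C t" K] C_def by auto
      hence xK: "x \<in> K" using K compact_imp_closed closure_closed by blast
      show "x \<in> C t"
      proof (rule ccontr)
        assume "x \<notin> C t"
        hence "f x > t" using xK C_def by auto
        then obtain d where d: "d > 0" "\<forall>y\<in>K. dist y x < d \<longrightarrow> f x - (f x - t) < f y"
          using lsc xK by (meson diff_gt_0_iff_gt)
        then obtain y where "y \<in> C t" "dist y x < d" using x closure_approachable by blast
        thus False using d C_def by auto
      qed
    qed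
    thus ?thesis using closure_subset_eq by blast
  qed
  have cp: "compact (C t)" for t
  proof -
    have "C t \<subseteq> K" unfolding C_def by auto
    hence "bounded (C t)" using K(1) bounded_subset compact_imp_bounded by blast
    thus ?thesis using cl[of t] compact_eq_bounded_closed by blast
  qed
  have mono: "t \<le> s \<Longrightarrow> C t \<subseteq> C s" for t s unfolding C_def by auto
  have bdd: "bdd_below (f ` K)"
  proof (rule ccontr)
    assume nb: "\<not> bdd_below (f ` K)"
    have ne: "C (- real n) \<noteq> {}" for n
    proof -
      obtain x where "x \<in> K" "f x < - real n" using nb unfolding bdd_below_def
        by (metis image_iff not_le)
      thus ?thesis unfolding C_def by force
    qed
    have "\<Inter>(range (\<lambda>n. C (- real n))) \<noteq> {}"
      by (rule compact_nest) (use cp ne mono in auto)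
    then obtain x where "\<forall>n. x \<in> C (- real n)" by blast
    hence "\<forall>n. f x \<le> - real n" unfolding C_def by auto
    moreover obtain n where "real n > - f x" using reals_Archimedean2 by blast
    ultimately show False by (metis less_le_not_le minus_less_iff)
  qed
  define L where "L = Inf (f ` K)"
  have ne: "C (L + 1 / (real n + 1)) \<noteq> {}" for n
  proof -
    have "L < L + 1 / (real n + 1)" by simp
    then obtain y where "y \<in> f ` K" "y < L + 1 / (real n + 1)"
      using K(2) cInf_less_iff[of "f ` K"] bdd unfolding L_def by blast
    thus ?thesis unfolding C_def by force
  qed
  have mono2: "m \<le> n \<Longrightarrow> C (L + 1 / (real n + 1)) \<subseteq> C (L + 1 / (real m + 1))" for m n
    by (rule mono) (simp add: frac_le)
  have "\<Inter>(range (\<lambda>n. C (L + 1 / (real n + 1)))) \<noteq> {}"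
    by (rule compact_nest) (use cp ne mono2 in auto)
  then obtain p where p: "\<forall>n. p \<in> C (L + 1 / (real n + 1))" by blast
  hence pK: "p \<in> K" unfolding C_def by auto
  have "f p \<le> L"
  proof (rule ccontr)
    assume "\<not> f p \<le> L"
    then obtain n where "inverse (real (Suc n)) < f p - L"
      using reals_Archimedean[of "f p - L"] by auto
    moreover have "f p \<le> L + 1 / (real n + 1)" using p unfolding C_def by auto
    ultimately show False by (simp add: inverse_eq_divide add.commute)
  qed
  moreover have "\<forall>x\<in>K. L \<le> f x" unfolding L_def using bdd by (simp add: cInf_lower)
  ultimately show ?thesis using pK by force
qed



definition bar :: "real^'n \<Rightarrow> real \<Rightarrow> real \<Rightarrow> real \<Rightarrow> real \<Rightarrow> real^'n \<Rightarrow> real" where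
  "bar y m e a c x = m + e * (exp (- a * ((x - y) \<bullet> (x - y))) - c)"

lemma bar_deriv:
  "(bar y m e a c has_derivative
     (\<lambda>h. (-2 * a * e * exp (- a * ((x - y) \<bullet> (x - y)))) * ((x - y) \<bullet> h))) (at x)"
  unfolding bar_def
  apply (rule derivative_eq_intros refl)+
  apply (simp add: algebra_simps inner_commute)
  done

lemma grad_bar:
  "grad (bar y m e a c) x = (\<chi> k. (-2 * a * e * exp (- a * ((x - y) \<bullet> (x - y)))) * ((x - y) \<bullet> axis k 1))"
  unfolding grad_def using frechet_derivative_at[OF bar_deriv] by metis

lemma gradk_deriv:
  "((\<lambda>z. grad (bar y m e a c) z $ k) has_derivative
     (\<lambda>h. -2 * a * e * exp (- a * ((x - y) \<bullet> (x - y))) *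
        ((- a * (2 * ((x - y) \<bullet> h))) * ((x - y) \<bullet> axis k 1) + h \<bullet> axis k 1))) (at x)"
  unfolding grad_bar vec_lambda_beta
  apply (rule derivative_eq_intros refl)+
  apply (simp add: algebra_simps inner_commute)
  done

lemma hess_bar:
  "hess (bar y m e a c) x = (\<chi> k l. -2 * a * e * exp (- a * ((x - y) \<bullet> (x - y))) *
        ((- a * (2 * ((x - y) $ l))) * ((x - y) $ k) + (if l = k then 1 else 0)))"
proof -
  have "hess (bar y m e a c) x $ k $ l = -2 * a * e * exp (- a * ((x - y) \<bullet> (x - y))) *
        ((- a * (2 * ((x - y) $ l))) * ((x - y) $ k) + (if l = k then 1 else 0))" for k l
  proof -
    have "hess (bar y m e a c) x $ k $ l = frechet_derivative (\<lambda>z. grad (bar y m e a c) z $ k) (at x) (axis l 1)"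
      unfolding hess_def by simp
    also have "... = -2 * a * e * exp (- a * ((x - y) \<bullet> (x - y))) *
        ((- a * (2 * ((x - y) \<bullet> axis l 1))) * ((x - y) \<bullet> axis k 1) + axis l 1 \<bullet> axis k (1::real))"
      using fun_cong[OF frechet_derivative_at[OF gradk_deriv[of y m e a c k x]], where x="axis l 1"] by metis
    finally show ?thesis by (simp add: inner_axis inner_axis_axis) (simp add: axis_def)
  qed
  thus ?thesis by (simp add: vec_eq_iff)
qed

lemma grad_bar': "grad (bar y m e a c) x = (\<chi> k. (-2 * a * e * exp (- a * ((x - y) \<bullet> (x - y)))) * (x - y) $ k)"
  unfolding grad_bar by (simp add: inner_axis)

lemma C2_bar: "C2_on S (bar y m e a c)"
proof -
  have h: "hess (bar y m e a c) = (\<lambda>x. \<chi> k l. -2 * a * e * exp (- a * ((x - y) \<bullet> (x - y))) *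
        ((- a * (2 * ((x - y) $ l))) * ((x - y) $ k) + (if l = k then 1 else 0)))"
    by (rule ext) (rule hess_bar)
  have d1: "\<forall>x\<in>S. bar y m e a c differentiable (at x)"
    using bar_deriv unfolding differentiable_def by blast
  have d2: "\<forall>x\<in>S. \<forall>k. (\<lambda>z. grad (bar y m e a c) z $ k) differentiable (at x)"
    using gradk_deriv unfolding differentiable_def by blast
  have c: "continuous_on S (hess (bar y m e a c))"
    unfolding h by (intro continuous_intros)
  show ?thesis unfolding C2_on_def using d1 d2 c by blast
qed

lemma qsum: "(x::real^'n) \<bullet> x = (\<Sum>k\<in>UNIV. (x $ k)^2)"
  by (simp add: inner_vec_def power2_eq_square)

lemma lap_bar:
  assumes "a > 0" "e > 0" "x \<noteq> y"
  shows "inf_laplace_minus (bar y m e a c) x =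
     e * exp (- a * ((x - y) \<bullet> (x - y))) * (4 * a^2 * ((x - y) \<bullet> (x - y)) - 2 * a)"
proof -
  define g where "g = x - y"
  define q where "q = g \<bullet> g"
  define A where "A = -2 * a * e * exp (- a * q)"
  have A0: "A \<noteq> 0" using assms unfolding A_def by auto
  have g0: "g \<noteq> 0" using assms unfolding g_def by auto
  have q0: "q > 0" using g0 unfolding q_def by simp
  have gr: "grad (bar y m e a c) x = A *\<^sub>R g"
    unfolding grad_bar' A_def g_def q_def by (simp add: vec_eq_iff)
  have hs: "hess (bar y m e a c) x $ k $ l = A * ((- a * (2 * (g $ l))) * (g $ k) + (if l = k then 1 else 0))" for k l
    unfolding hess_bar A_def g_def q_def by simp
  have grne: "grad (bar y m e a c) x \<noteq> 0" using gr A0 g0 by simp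
  have nrm: "(norm (grad (bar y m e a c) x))^2 = A^2 * q"
    unfolding gr q_def by (simp add: power_mult_distrib power2_norm_eq_inner[symmetric])
  have inner: "(\<Sum>l\<in>UNIV. (A * g $ k) * (A * g $ l) * (A * ((- a * (2 * (g $ l))) * (g $ k) + (if l = k then 1 else 0))))
      = A^3 * (-2 * a * (g $ k)^2 * q + (g $ k)^2)" for k
  proof -
    have "(\<Sum>l\<in>UNIV. (A * g $ k) * (A * g $ l) * (A * ((- a * (2 * (g $ l))) * (g $ k) + (if l = k then 1 else 0))))
       = (\<Sum>l\<in>UNIV. A^3 * (-2 * a * (g $ k)^2) * (g $ l)^2 + (if l = k then A^3 * (g $ k)^2 else 0))"
      by (rule sum.cong) (auto simp: algebra_simps power2_eq_square power3_eq_cube)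
    also have "... = A^3 * (-2 * a * (g $ k)^2) * (\<Sum>l\<in>UNIV. (g $ l)^2) + A^3 * (g $ k)^2"
      by (subst sum.distrib) (simp add: sum_distrib_left)
    finally show ?thesis unfolding q_def qsum by (simp add: algebra_simps)
  qed
  have tot: "(\<Sum>k\<in>UNIV. \<Sum>l\<in>UNIV. grad (bar y m e a c) x $ k * grad (bar y m e a c) x $ l * hess (bar y m e a c) x $ k $ l)
     = A^3 * (-2 * a * q^2 + q)"
  proof -
    have "(\<Sum>k\<in>UNIV. \<Sum>l\<in>UNIV. grad (bar y m e a c) x $ k * grad (bar y m e a c) x $ l * hess (bar y m e a c) x $ k $ l)
       = (\<Sum>k\<in>UNIV. A^3 * (-2 * a * q) * (g $ k)^2 + A^3 * (g $ k)^2)"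
    proof -
      have "(\<Sum>k\<in>UNIV. \<Sum>l\<in>UNIV. grad (bar y m e a c) x $ k * grad (bar y m e a c) x $ l * hess (bar y m e a c) x $ k $ l)
        = (\<Sum>k\<in>UNIV. \<Sum>l\<in>UNIV. (A * g $ k) * (A * g $ l) * (A * ((- a * (2 * (g $ l))) * (g $ k) + (if l = k then 1 else 0))))"
        unfolding gr hs by simp
      also have "... = (\<Sum>k\<in>UNIV. A^3 * (-2 * a * q) * (g $ k)^2 + A^3 * (g $ k)^2)"
        by (rule sum.cong[OF refl], subst inner, simp add: algebra_simps)
      finally show ?thesis .
    qed
    also have "... = A^3 * (-2 * a * q) * (\<Sum>k\<in>UNIV. (g $ k)^2) + A^3 * (\<Sum>k\<in>UNIV. (g $ k)^2)"
      by (subst sum.distrib) (simp only: sum_distrib_left)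
    finally show ?thesis unfolding q_def qsum by (simp add: algebra_simps power2_eq_square)
  qed
  have "inf_laplace_minus (bar y m e a c) x = A^3 * (-2 * a * q^2 + q) / (A^2 * q)"
    unfolding inf_laplace_minus_def using grne tot nrm by simp
  also have "... = A * (-2 * a * q + 1)"
    using A0 q0 by (simp add: field_simps power2_eq_square power3_eq_cube)
  finally show ?thesis unfolding A_def q_def g_def by (simp add: algebra_simps power2_eq_square)
qed



lemma lap_zero: "inf_laplace_minus (bar y m 0 a c) x = 0"
proof -
  have g: "grad (bar y m 0 a c) x = 0" unfolding grad_bar' by (simp add: vec_eq_iff)
  have h: "hess (bar y m 0 a c) x = 0" unfolding hess_bar by (simp add: vec_eq_iff)
  have "{(hess (bar y m 0 a c) x *v v) \<bullet> v | v. norm v = 1} = {0}"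
    unfolding h by (auto intro!: exI[where x="axis undefined (1::real)"])
  thus ?thesis unfolding inf_laplace_minus_def using g by simp
qed

lemma prop_le:
  assumes sc: "super_cond U u w" and x: "x \<in> U" and ge: "\<forall>y\<in>U. m \<le> u y" and ux: "u x = m"
  shows "w x \<le> m"
proof -
  have b: "bar x 0 0 0 0 z = 0" for z unfolding bar_def by simp
  have "local_min_on U (\<lambda>y. u y - bar x 0 0 0 0 y) x"
    unfolding local_min_on_def b using x ge ux by (auto intro: exI[of _ 1])
  hence "- inf_laplace_minus (bar x 0 0 0 0) x + u x - w x \<ge> 0"
    using sc C2_bar unfolding super_cond_def by blast
  thus ?thesis using lap_zero[of x 0 0 0 x] ux by simp
qed

lemma lsc_rel:
  assumes "lsc_on U u" "K \<subseteq> U"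
  shows "\<forall>x\<in>K. \<forall>e>0. \<exists>d>0. \<forall>y\<in>K. dist y x < d \<longrightarrow> u x - e < u y"
  using assms unfolding lsc_on_def by (meson subsetD)

lemma compl_open:
  assumes U: "open U" and lsc: "lsc_on U u" and ge: "\<forall>y\<in>U. m \<le> u y"
  shows "open (U - {x\<in>U. u x = m})"
  unfolding open_contains_ball
proof
  fix x assume x: "x \<in> U - {x\<in>U. u x = m}"
  hence xU: "x \<in> U" and gt: "u x > m" using ge by force+
  obtain d1 where d1: "d1 > 0" "ball x d1 \<subseteq> U" using U xU open_contains_ball by blast
  obtain d2 where d2: "d2 > 0" "\<forall>y\<in>U. dist y x < d2 \<longrightarrow> u x - (u x - m) < u y"
    using lsc xU gt unfolding lsc_on_def by (meson diff_gt_0_iff_gt)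
  have "ball x (min d1 d2) \<subseteq> U - {x\<in>U. u x = m}"
  proof
    fix y assume "y \<in> ball x (min d1 d2)"
    hence "y \<in> U" "dist y x < d2" using d1 by (auto simp: dist_commute)
    thus "y \<in> U - {x\<in>U. u x = m}" using d2 by force
  qed
  thus "\<exists>e>0. ball x e \<subseteq> U - {x\<in>U. u x = m}" using d1 d2 by (intro exI[of _ "min d1 d2"]) auto
qed

lemma bar_val: "bar y m e a c x = m + e * (exp (- a * (dist x y)^2) - c)"
  unfolding bar_def by (simp add: dist_norm power2_norm_eq_inner)

lemma M_open:
  fixes U :: "(real^'n) set" and u1 u2 :: "real^'n \<Rightarrow> real"
  assumes U: "open U" and lsc: "lsc_on U u1" and sc: "super_cond U u1 u2"
    and ge: "\<forall>x\<in>U. m \<le> u1 x \<and> m \<le> u2 x"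
  shows "open {x\<in>U. u1 x = m}"
  unfolding open_contains_ball
proof
  define M where "M = {x\<in>U. u1 x = m}"
  fix z assume zM: "z \<in> {x\<in>U. u1 x = m}"
  hence zU: "z \<in> U" and zM': "z \<in> M" unfolding M_def by auto
  obtain \<rho>0 where \<rho>0: "\<rho>0 > 0" "ball z \<rho>0 \<subseteq> U"
    using U zU open_contains_ball by blast
  define \<rho> where "\<rho> = \<rho>0 / 3"
  have \<rho>: "\<rho> > 0" "ball z (3 * \<rho>) \<subseteq> U" using \<rho>0 unfolding \<rho>_def by auto
  have "ball z \<rho> \<subseteq> M"
  proof
    fix y assume yb: "y \<in> ball z \<rho>"
    hence yU: "y \<in> U" using \<rho> by auto
    show "y \<in> M"
    proof (rule ccontr)
      assume yM: "y \<notin> M"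
      have Mne: "M \<noteq> {}" using zM' by auto
      define d where "d = infdist y M"
      have dle: "d \<le> dist y z" unfolding d_def using zM' by (rule infdist_le)
      have dz: "dist y z < \<rho>" using yb by (simp add: dist_commute)
      obtain e where e: "e > 0" "ball y e \<subseteq> U - M"
        using compl_open[OF U lsc, of m] ge yU yM unfolding M_def open_contains_ball by blast
      have "\<forall>a\<in>M. e \<le> dist y a" using e by (metis Diff_iff mem_ball not_le subsetD)
      hence "e \<le> d" unfolding d_def infdist_notempty[OF Mne] using Mne by (intro cINF_greatest) auto
      hence dpos: "d > 0" using e by simp
      obtain z' where z': "z' \<in> M" "dist y z' < 2 * d"
      proof (rule ccontr)
        assume "\<not> thesis"
        hence "\<forall>a\<in>M. 2 * d \<le> dist y a" using that by (meson not_le)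
        hence "2 * d \<le> d" unfolding d_def infdist_notempty[OF Mne] using Mne
          by (intro cINF_greatest) (auto simp: d_def infdist_notempty[OF Mne])
        thus False using dpos by simp
      qed
      define r1 where "r1 = d / 2"
      define r2 where "r2 = dist y z'"
      have r1pos: "r1 > 0" using dpos r1_def by simp
      have r12: "r1 < r2" using infdist_le[OF z'(1), of y] dpos unfolding r1_def r2_def d_def by simp
      have r2b: "r2 < 2 * \<rho>" using z'(2) dle dz unfolding r2_def by simp
      define A where "A = cball y r2 - ball y r1"
      have Adef: "x \<in> A \<longleftrightarrow> r1 \<le> dist y x \<and> dist y x \<le> r2" for x unfolding A_def by auto
      have Acomp: "compact A" unfolding A_def by (intro compact_diff compact_cball open_ball)
      have AU: "A \<subseteq> U"
      proof
        fix x assume "x \<in> A"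
        hence "dist y x \<le> r2" using Adef by simp
        hence "dist z x < 3 * \<rho>" using dist_triangle[of z x y] dz r2b by (simp add: dist_commute)
        thus "x \<in> U" using \<rho>(2) mem_ball by blast
      qed
      have z'A: "z' \<in> A" using Adef r12 unfolding r2_def by simp
      define S where "S = sphere y r1"
      have SA: "S \<subseteq> A"
      proof
        fix x assume "x \<in> S"
        hence "dist y x = r1" unfolding S_def by simp
        thus "x \<in> A" unfolding Adef using r12 by simp
      qed
      have Scomp: "compact S" unfolding S_def by simp
      have Sne: "S \<noteq> {}" unfolding S_def using r1pos by simp
      have SM: "x \<in> S \<Longrightarrow> u1 x > m" for x
      proof -
        assume xS: "x \<in> S"
        hence xU: "x \<in> U" using SA AU by auto
        have "x \<notin> M"
        proof
          assume "x \<in> M"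
          hence "d \<le> dist y x" unfolding d_def by (rule infdist_le)
          thus False using xS dpos unfolding S_def r1_def by simp
        qed
        moreover have "m \<le> u1 x" using ge xU by blast
        ultimately show ?thesis using xU unfolding M_def by auto
      qed
      obtain p0 where p0: "p0 \<in> S" "\<forall>x\<in>S. u1 p0 \<le> u1 x"
        using lsc_min[OF Scomp Sne lsc_rel[OF lsc]] SA AU by blast
      define \<delta> where "\<delta> = u1 p0 - m"
      have \<delta>pos: "\<delta> > 0" using SM[OF p0(1)] \<delta>_def by simp
      define \<alpha> where "\<alpha> = 1 + 1 / r1^2"
      define \<epsilon> where "\<epsilon> = \<delta> / 2"
      define c where "c = exp (- \<alpha> * r2^2)"
      define \<psi> where "\<psi> = bar y m \<epsilon> \<alpha> c"
      have \<alpha>1: "\<alpha> \<ge> 1" unfolding \<alpha>_def by simp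
      have \<alpha>r: "\<alpha> * r1^2 \<ge> 1" unfolding \<alpha>_def using r1pos by (simp add: field_simps)
      have \<epsilon>pos: "\<epsilon> > 0" using \<delta>pos \<epsilon>_def by simp
      have cpos: "c > 0" unfolding c_def by simp
      have \<psi>v: "\<psi> x = m + \<epsilon> * (exp (- \<alpha> * (dist x y)^2) - c)" for x unfolding \<psi>_def bar_val ..
      have \<psi>le: "\<psi> x \<le> m + \<epsilon>" for x
      proof -
        have "exp (- \<alpha> * (dist x y)^2) \<le> 1" using \<alpha>1 by simp
        hence "\<epsilon> * exp (- \<alpha> * (dist x y)^2) \<le> \<epsilon> * 1" using \<epsilon>pos by (intro mult_left_mono) auto
        moreover have "\<epsilon> * c > 0" using \<epsilon>pos cpos by simp
        ultimately show ?thesis unfolding \<psi>v by (simp add: right_diff_distrib)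
      qed
      have \<psi>out: "dist y x > r2 \<Longrightarrow> \<psi> x < m" for x
      proof -
        assume "dist y x > r2"
        hence "(dist x y)^2 > r2^2" using r12 r1pos by (simp add: dist_commute power_strict_mono)
        hence "- \<alpha> * (dist x y)^2 < - \<alpha> * r2^2" using \<alpha>1 by simp
        hence "exp (- \<alpha> * (dist x y)^2) < c" unfolding c_def by simp
        thus ?thesis unfolding \<psi>v using \<epsilon>pos by (simp add: mult_pos_neg)
      qed
      define f where "f x = u1 x - \<psi> x" for x
      have \<psi>cont: "continuous_on UNIV \<psi>"
        unfolding \<psi>_def bar_def by (intro continuous_intros)
      have flsc: "\<forall>x\<in>A. \<forall>e>0. \<exists>d>0. \<forall>y\<in>A. dist y x < d \<longrightarrow> f x - e < f y"
      proof (intro ballI allI impI)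
        fix x e assume xA: "x \<in> A" and e: "(e::real) > 0"
        obtain d1 where d1: "d1 > 0" "\<forall>y\<in>A. dist y x < d1 \<longrightarrow> u1 x - e/2 < u1 y"
          using lsc_rel[OF lsc AU] xA e by (meson half_gt_zero)
        obtain d2 where d2: "d2 > 0" "\<forall>y\<in>UNIV. dist y x < d2 \<longrightarrow> dist (\<psi> y) (\<psi> x) < e/2"
          using \<psi>cont e unfolding continuous_on_iff by (meson UNIV_I half_gt_zero)
        show "\<exists>d>0. \<forall>y\<in>A. dist y x < d \<longrightarrow> f x - e < f y"
        proof (intro exI[of _ "min d1 d2"] conjI ballI impI)
          fix y assume "y \<in> A" "dist y x < min d1 d2"
          hence "u1 x - e/2 < u1 y" "dist (\<psi> y) (\<psi> x) < e/2" using d1 d2 by auto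
          thus "f x - e < f y" unfolding f_def dist_real_def by linarith
        qed (use d1 d2 in auto)
      qed
      have Ane: "A \<noteq> {}" using z'A by auto
      obtain p where p: "p \<in> A" "\<forall>x\<in>A. f p \<le> f x"
        using lsc_min[OF Acomp Ane flsc] by blast
      have fz': "f z' = 0"
      proof -
        have "u1 z' = m" using z' unfolding M_def by auto
        moreover have "\<psi> z' = m" unfolding \<psi>v c_def r2_def by (simp add: dist_commute)
        ultimately show ?thesis unfolding f_def by simp
      qed
      have "f p \<le> f z'" using p(2) z'A by blast
      hence fp: "f p \<le> 0" using fz' by simp
      have pU: "p \<in> U" using p AU by auto
      have pr1: "dist y p > r1"
      proof (rule ccontr)
        assume "\<not> dist y p > r1"
        hence "p \<in> S" using p Adef unfolding S_def by (simp add: dist_commute)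
        hence "u1 p0 \<le> u1 p" using p0(2) by blast
        hence "u1 p \<ge> m + \<delta>" unfolding \<delta>_def by simp
        hence "f p \<ge> \<delta> - \<epsilon>" unfolding f_def using \<psi>le[of p] by simp
        thus False using fp \<delta>pos \<epsilon>_def by simp
      qed
      have lm: "local_min_on U f p"
        unfolding local_min_on_def
      proof (intro conjI pU exI[of _ "dist y p - r1"] ballI impI)
        show "dist y p - r1 > 0" using pr1 by simp
        fix x assume xU: "x \<in> U" and dx: "dist x p < dist y p - r1"
        have "dist y p \<le> dist y x + dist x p" by (rule dist_triangle)
        hence xr1: "dist y x > r1" using dx by simp
        show "f p \<le> f x"
        proof (cases "dist y x \<le> r2")
          case True thus ?thesis using p xr1 Adef by simp
        next
          case False
          hence "\<psi> x < m" using \<psi>out by simp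
          moreover have "m \<le> u1 x" using ge xU by blast
          ultimately show ?thesis using fp unfolding f_def by simp
        qed
      qed
      have fe: "f = (\<lambda>y. u1 y - \<psi> y)" using f_def by (intro ext) simp
      have scx: "\<forall>\<phi> x0. C2_on U \<phi> \<longrightarrow> local_min_on U (\<lambda>y. u1 y - \<phi> y) x0 \<longrightarrow>
        - inf_laplace_minus \<phi> x0 + u1 x0 - u2 x0 \<ge> 0" using sc unfolding super_cond_def .
      have C2\<psi>: "C2_on U \<psi>" unfolding \<psi>_def by (rule C2_bar)
      have ineq: "- inf_laplace_minus \<psi> p + u1 p - u2 p \<ge> 0"
        using scx C2\<psi> lm unfolding fe by blast
      have py: "p \<noteq> y" using pr1 r1pos by auto
      define q where "q = (p - y) \<bullet> (p - y)"
      define E where "E = exp (- \<alpha> * q)"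
      have qd: "q = (dist p y)^2" unfolding q_def by (simp add: dist_norm power2_norm_eq_inner)
      have lap: "inf_laplace_minus \<psi> p = \<epsilon> * E * (4 * \<alpha>^2 * q - 2 * \<alpha>)"
        unfolding \<psi>_def E_def q_def using lap_bar[of \<alpha> \<epsilon> p y m c] \<alpha>1 \<epsilon>pos py by simp
      have u1p: "u1 p \<le> \<psi> p" using fp unfolding f_def by simp
      have "\<psi> p < m + \<epsilon> * E" unfolding \<psi>v E_def qd using \<epsilon>pos cpos by simp
      moreover have "m \<le> u2 p" using ge pU by blast
      ultimately have "\<epsilon> * E * (4 * \<alpha>^2 * q - 2 * \<alpha>) < \<epsilon> * E * 1"
        using ineq lap u1p by linarith
      moreover have "\<epsilon> * E > 0" using \<epsilon>pos unfolding E_def by simp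
      ultimately have lt: "4 * \<alpha>^2 * q - 2 * \<alpha> < 1" by (simp only: mult_less_cancel_left_pos)
      have "q \<ge> r1^2" unfolding qd using pr1 r1pos by (simp add: dist_commute power_mono)
      hence "\<alpha> * q \<ge> \<alpha> * r1^2" using \<alpha>1 by (intro mult_left_mono) auto
      hence aq: "\<alpha> * q \<ge> 1" using \<alpha>r by linarith
      have "4 * \<alpha>^2 * q = (4 * \<alpha>) * (\<alpha> * q)" by (simp add: power2_eq_square)
      also have "... \<ge> (4 * \<alpha>) * 1" using aq \<alpha>1 by (intro mult_left_mono) auto
      finally have "4 * \<alpha>^2 * q \<ge> 4 * \<alpha>" by simp
      thus False using lt \<alpha>1 by linarith
    qed
  qed
  thus "\<exists>e>0. ball z e \<subseteq> {x\<in>U. u1 x = m}" using \<rho> unfolding M_def by blast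
qed


theorem mainTheorem2:
  fixes U :: "(real^'n) set" and u1 u2 :: "real^'n \<Rightarrow> real"
  assumes "bounded U" and "open U" and "connected U"
    and "visc_supersol U u1 u2"
    and "i0 \<in> {1::nat, 2}" and "xs \<in> U"
    and "\<forall>x\<in>U. (if i0 = 1 then u1 else u2) xs \<le> u1 x \<and> (if i0 = 1 then u1 else u2) xs \<le> u2 x"
  shows "\<exists>C. \<forall>x\<in>U. u1 x = C \<and> u2 x = C"
proof -
  note U = assms(2)
  have lsc1: "lsc_on U u1" and lsc2: "lsc_on U u2" and sc12: "super_cond U u1 u2"
    and sc21: "super_cond U u2 u1" using assms(4) unfolding visc_supersol_def by auto
  define m where "m = (if i0 = 1 then u1 else u2) xs"
  have ge: "\<forall>x\<in>U. m \<le> u1 x \<and> m \<le> u2 x" using assms(7) unfolding m_def .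
  have ge1: "\<forall>y\<in>U. m \<le> u1 y" and ge2: "\<forall>y\<in>U. m \<le> u2 y" using ge by auto
  have eq: "u1 x = m \<longleftrightarrow> u2 x = m" if x: "x \<in> U" for x
  proof
    assume "u1 x = m"
    hence "u2 x \<le> m" using prop_le[OF sc12 x ge1] by simp
    thus "u2 x = m" using ge x by force
  next
    assume "u2 x = m"
    hence "u1 x \<le> m" using prop_le[OF sc21 x ge2] by simp
    thus "u1 x = m" using ge x by force
  qed
  have xs1: "u1 xs = m"
  proof (cases "i0 = 1")
    case True thus ?thesis unfolding m_def by simp
  next
    case False
    hence "u2 xs = m" unfolding m_def by simp
    thus ?thesis using eq assms(6) by blast
  qed
  define M where "M = {x\<in>U. u1 x = m}"
  have o1: "open M" unfolding M_def by (rule M_open[OF U lsc1 sc12 ge])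
  have o2: "open (U - M)" unfolding M_def by (rule compl_open[OF U lsc1 ge1])
  have MU: "M \<subseteq> U" unfolding M_def by auto
  have "openin (top_of_set U) M" using o1 MU openin_open_eq[OF U] by blast
  moreover have "closedin (top_of_set U) M"
    unfolding closedin_def using MU o2 openin_open_eq[OF U] by auto
  ultimately have "M = {} \<or> M = U" using assms(3) unfolding connected_clopen by blast
  moreover have "xs \<in> M" unfolding M_def using xs1 assms(6) by simp
  ultimately have "M = U" by blast
  hence "\<forall>x\<in>U. u1 x = m \<and> u2 x = m" using eq unfolding M_def by blast
  thus ?thesis by blast
qed

end
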